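(* Let $f:\mathbb{R}^n\to\mathbb{R}$ be bounded below and continuously differentiable with $\nabla f$ Lipschitz with constant $L_{\nabla f}$, and let $\tilde f$ satisfy $|\tilde f(z)-f(z)|\le\epsilon_f$ for all $z$, for some $\epsilon_f>0$. Let $x\in\mathbb{R}^n$, $\Delta>0$, points $y_1,\ldots,y_p$ with $\|y_i-x\|\le\beta\Delta$ for some $\beta>0$ and all $i$, with $\hat F$ invertible, and let $m(y)=c+g^T(y-x)+\tfrac12(y-x)^TH(y-x)$ be the minimum Frobenius norm quadratic interpolant to the values $\tilde f(y_1),\ldots,\tilde f(y_p)$ (see context). Then $\|H\|\le\kappa_H:=\frac{L_{\nabla f}}{2}p\beta^4\|\hat F^{-1}\|_\infty+\frac{\epsilon_f}{\Delta^2}p\beta^2\|\hat F^{-1}\|_\infty$, and for all $y\in B(x,\Delta)$, $$|m(y)-f(y)|\le\kappa_{\mathrm{mf}}\Delta^2+\tilde\kappa_{\mathrm{mf}}\epsilon_f,\qquad\|\nabla m(y)-\nabla f(y)\|\le\kappa_{\mathrm{mg}}\Delta+\tilde\kappa_{\mathrm{mg}}\frac{\epsilon_f}{\Delta},$$ where $\kappa_{\mathrm{mf}}=\frac{L_{\nabla f}+\kappa_H}{2}(1+\sqrt n)\beta^2\|\hat M^\dagger\|_\infty+\frac{L_{\nabla f}+\kappa_H}{2}$, $\tilde\kappa_{\mathrm{mf}}=(1+\sqrt n)\|\hat M^\dagger\|_\infty$, $\kappa_{\mathrm{mg}}=2\kappa_{\mathrm{mf}}+2\kappa_H$ and $\t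ilde\kappa_{\mathrm{mg}}=2\tilde\kappa_{\mathrm{mf}}$.
   Context: Here $n+2\le p\le(n+1)(n+2)/2-1$. Let $\hat s_i=(y_i-x)/\Delta$, $\hat M\in\mathbb{R}^{p\times(n+1)}$ with rows $[1,\hat s_i^T]$ and Moore–Penrose pseudoinverse $\hat M^\dagger$, $\hat P_{ij}=\tfrac12(\hat s_i^T\hat s_j)^2$, $\hat F=\begin{bmatrix}\hat P&\hat M\\ \hat M^T&0\end{bmatrix}$. The minimum Frobenius norm interpolant to values $v_1,\ldots,v_p$ is $q(y)=c+g^T(y-x)+\tfrac12(y-x)^TH(y-x)$ with $H$ symmetric minimizing $\tfrac14\|H\|_F^2$ subject to $q(y_i)=v_i$; when $\hat F$ is invertible it is obtained by solving $\hat F[\hat\lambda;c;\Delta g]=[v;0;0_n]$ and $H=\sum_i(\hat\lambda_i/\Delta^4)(y_i-x)(y_i-x)^T$. $\|A\|_\infty$ is the maximum absolute row sum; $B(x,\Delta)=\{y:\|y-x\|\le\Delta\}$. *)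

theory Defs
  imports "HOL-Analysis.Analysis"
begin

text \<open>Quadratic model q(z) = c + g^T (z-x) + 1/2 (z-x)^T H (z-x).\<close>
definition qval :: "real \<Rightarrow> real^'n \<Rightarrow> real^'n^'n \<Rightarrow> real^'n \<Rightarrow> real^'n \<Rightarrow> real" where
  "qval c g H x z = c + inner g (z - x) + 1/2 * inner (z - x) (H *v (z - x))"

text \<open>Minimum Frobenius norm interpolant: H symmetric, interpolation conditions,
  and H minimises (1/4) ||H||_F^2 (the norm on real^'n^'n is the Frobenius norm)
  among all symmetric interpolating quadratics.\<close>
definition is_mfn_interp ::
  "real^'n \<Rightarrow> ('p::finite \<Rightarrow> real^'n) \<Rightarrow> ('p \<Rightarrow> real) \<Rightarrow> real \<Rightarrow> real^'n \<Rightarrow> real^'n^'n \<Rightarrow> bool" where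
  "is_mfn_interp x y v c g H \<longleftrightarrow>
     transpose H = H \<and> (\<forall>i. qval c g H x (y i) = v i) \<and>
     (\<forall>c' g' H'. transpose H' = H' \<and> (\<forall>i. qval c' g' H' x (y i) = v i)
        \<longrightarrow> (1/4) * (norm H)^2 \<le> (1/4) * (norm H')^2)"

text \<open>Scaled points s_i = (y_i - x)/Delta.\<close>
definition shat :: "real^'n \<Rightarrow> real \<Rightarrow> ('p \<Rightarrow> real^'n) \<Rightarrow> 'p \<Rightarrow> real^'n" where
  "shat x \<Delta> y i = (y i - x) /\<^sub>R \<Delta>"

text \<open>M-hat: rows [1, s_i^T]; the column index Inl () is the constant column.\<close>
definition Mhat :: "real^'n \<Rightarrow> real \<Rightarrow> ('p::finite \<Rightarrow> real^'n) \<Rightarrow> real^(unit + 'n)^'p" where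
  "Mhat x \<Delta> y = (\<chi> i k. case k of Inl _ \<Rightarrow> 1 | Inr j \<Rightarrow> shat x \<Delta> y i $ j)"

definition Phat :: "real^'n \<Rightarrow> real \<Rightarrow> ('p::finite \<Rightarrow> real^'n) \<Rightarrow> real^'p^'p" where
  "Phat x \<Delta> y = (\<chi> i j. 1/2 * (inner (shat x \<Delta> y i) (shat x \<Delta> y j))^2)"

text \<open>F-hat = [[P, M],[M^T, 0]].\<close>
definition Fhat :: "real^'n \<Rightarrow> real \<Rightarrow> ('p::finite \<Rightarrow> real^'n)
    \<Rightarrow> real^('p + (unit + 'n))^('p + (unit + 'n))" where
  "Fhat x \<Delta> y = (\<chi> a b. case a of
      Inl i \<Rightarrow> (case b of Inl j \<Rightarrow> Phat x \<Delta> y $ i $ j | Inr k \<Rightarrow> Mhat x \<Delta> y $ i $ k)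
    | Inr k \<Rightarrow> (case b of Inl j \<Rightarrow> Mhat x \<Delta> y $ j $ k | Inr _ \<Rightarrow> 0))"

text \<open>Moore-Penrose pseudoinverse, via the four Penrose conditions.\<close>
definition pinv :: "real^'m^'k \<Rightarrow> real^'k^'m" where
  "pinv A = (THE B. A ** B ** A = A \<and> B ** A ** B = B \<and>
       transpose (A ** B) = A ** B \<and> transpose (B ** A) = B ** A)"

text \<open>Infinity norm: maximum absolute row sum.\<close>
definition inf_norm :: "real^'m^'k \<Rightarrow> real" where
  "inf_norm A = Max (range (\<lambda>i. \<Sum>j\<in>UNIV. \<bar>A $ i $ j\<bar>))"

end

theory Submission
  imports Defs
begin



lemma line_deriv:
  fixes f :: "real^'n \<Rightarrow> real"
  assumes grad: "\<And>z. GDERIV f z :> gf z"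
  shows "((\<lambda>t. f (u + t *\<^sub>R d)) has_real_derivative inner d (gf (u + t *\<^sub>R d))) (at t)"
proof -
  have h1: "((\<lambda>t. u + t *\<^sub>R d) has_derivative (\<lambda>h. h *\<^sub>R d)) (at t)"
    by (auto intro!: derivative_eq_intros)
  have h2: "(f has_derivative (\<lambda>h. inner h (gf (u + t *\<^sub>R d)))) (at (u + t *\<^sub>R d))"
    using grad[of "u + t *\<^sub>R d"] unfolding gderiv_def by simp
  have "((\<lambda>t. f (u + t *\<^sub>R d)) has_derivative (\<lambda>h. inner (h *\<^sub>R d) (gf (u + t *\<^sub>R d)))) (at t)"
    using has_derivative_compose[OF h1 h2] by (simp add: o_def)
  moreover have "(\<lambda>h. inner (h *\<^sub>R d) (gf (u + t *\<^sub>R d))) = (*) (inner d (gf (u + t *\<^sub>R d)))"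
    by (auto simp: fun_eq_iff inner_commute)
  ultimately show ?thesis
    by (simp add: has_field_derivative_def)
qed

lemma taylor_lip:
  fixes f :: "real^'n \<Rightarrow> real"
  assumes grad: "\<And>z. GDERIV f z :> gf z" and lip: "L-lipschitz_on UNIV gf"
  shows "\<bar>f w - f u - inner (gf u) (w - u)\<bar> \<le> L/2 * norm (w - u)^2"
proof -
  define d where "d = w - u"
  have L0: "0 \<le> L" using lipschitz_on_nonneg[OF lip] .
  have key: "\<bar>inner d (gf (u + t *\<^sub>R d)) - inner (gf u) d\<bar> \<le> L * t * norm d ^ 2" if "0 \<le> t" for t
  proof -
    have "\<bar>inner d (gf (u + t *\<^sub>R d)) - inner (gf u) d\<bar> = \<bar>inner d (gf (u + t *\<^sub>R d) - gf u)\<bar>"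
      by (simp add: inner_diff_right inner_commute)
    also have "\<dots> \<le> norm d * norm (gf (u + t *\<^sub>R d) - gf u)"
      by (rule Cauchy_Schwarz_ineq2)
    also have "norm (gf (u + t *\<^sub>R d) - gf u) \<le> L * norm (t *\<^sub>R d)"
      using lipschitz_onD[OF lip, of "u + t *\<^sub>R d" u] by (simp add: dist_norm)
    hence "norm d * norm (gf (u + t *\<^sub>R d) - gf u) \<le> norm d * (L * norm (t *\<^sub>R d))"
      by (simp add: mult_left_mono)
    also have "\<dots> = L * t * norm d ^ 2" using that by (simp add: power2_eq_square)
    finally show ?thesis .
  qed
  define p1 where "p1 t = f (u + t *\<^sub>R d) - t * inner (gf u) d - L/2 * t^2 * norm d ^ 2" for t
  define p2 where "p2 t = f (u + t *\<^sub>R d) - t * inner (gf u) d + L/2 * t^2 * norm d ^ 2" for t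
  have d1: "DERIV p1 t :> inner d (gf (u + t *\<^sub>R d)) - inner (gf u) d - L * t * norm d ^ 2" for t
    unfolding p1_def
    by (auto intro!: derivative_eq_intros line_deriv[OF grad])
  have d2: "DERIV p2 t :> inner d (gf (u + t *\<^sub>R d)) - inner (gf u) d + L * t * norm d ^ 2" for t
    unfolding p2_def
    by (auto intro!: derivative_eq_intros line_deriv[OF grad])
  obtain z1 where z1: "0 < z1" "z1 < 1" "p1 1 - p1 0 = (1 - 0) * (inner d (gf (u + z1 *\<^sub>R d)) - inner (gf u) d - L * z1 * norm d ^ 2)"
    using MVT2[of 0 1 p1, OF _ d1] by auto
  obtain z2 where z2: "0 < z2" "z2 < 1" "p2 1 - p2 0 = (1 - 0) * (inner d (gf (u + z2 *\<^sub>R d)) - inner (gf u) d + L * z2 * norm d ^ 2)"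
    using MVT2[of 0 1 p2, OF _ d2] by auto
  have "p1 1 - p1 0 \<le> 0" using z1 key[of z1] by simp
  moreover have "p2 1 - p2 0 \<ge> 0" using z2 key[of z2] by simp
  ultimately have "f w - f u - inner (gf u) (w - u) \<le> L/2 * norm (w - u)^2"
      "-(f w - f u - inner (gf u) (w - u)) \<le> L/2 * norm (w - u)^2"
    unfolding p1_def p2_def d_def by (simp_all add: inner_commute)
  then show ?thesis by (simp only: abs_le_iff)
qed


lemma left_inv_of_inj:
  fixes M :: "real^'m^'k" and B :: "real^'k^'m"
  assumes inj: "inj ((*v) M)" and h: "M ** B ** M = M"
  shows "B ** M = mat 1"
proof (rule matrix_eq[THEN iffD2], intro allI)
  fix v
  have "M *v ((B ** M) *v v) = M *v v"
    by (metis h matrix_vector_mul_assoc)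
  then show "(B ** M) *v v = mat 1 *v v" using inj by (simp add: inj_eq)
qed

lemma pinv_left:
  fixes M :: "real^'m^'k"
  assumes inj: "inj ((*v) M)"
  shows "pinv M ** M = mat 1"
proof -
  define G where "G = transpose M ** M"
  have G0: "z = 0" if "G *v z = 0" for z
  proof -
    have "inner z (G *v z) = inner (M *v z) (M *v z)"
      unfolding G_def matrix_vector_mul_assoc[symmetric] transpose_matrix_vector
      by (metis dot_lmul_matrix inner_commute)
    then have "M *v z = 0" using that by simp
    then have "M *v z = M *v 0" by simp
    then show "z = 0" using inj unfolding inj_def by blast
  qed
  have "inj ((*v) G)"
  proof (rule injI)
    fix a b assume "G *v a = G *v b"
    then have "G *v (a - b) = 0" by (simp add: matrix_vector_mult_diff_distrib)
    then have "a - b = 0" by (rule G0)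
    then show "a = b" by simp
  qed
  then obtain Gi where Gi: "Gi ** G = mat 1" using matrix_left_invertible_injective by blast
  then have Gi2: "G ** Gi = mat 1" using matrix_left_right_inverse by blast
  have GT: "transpose G = G" unfolding G_def by (simp add: matrix_transpose_mul)
  have "transpose Gi ** G = mat 1"
    using arg_cong[OF Gi2, of transpose] by (simp add: matrix_transpose_mul GT)
  then have GiT: "transpose Gi = Gi"
    by (metis Gi2 matrix_mul_assoc matrix_mul_lid matrix_mul_rid)
  define B0 where "B0 = Gi ** transpose M"
  have B0M: "B0 ** M = mat 1" unfolding B0_def using Gi by (simp add: G_def matrix_mul_assoc)
  define P where "P B \<longleftrightarrow> M ** B ** M = M \<and> B ** M ** B = B \<and>
       transpose (M ** B) = M ** B \<and> transpose (B ** M) = B ** M" for B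
  have PB0: "P B0"
    unfolding P_def using B0M
    by (simp add: matrix_mul_assoc[symmetric] B0_def matrix_transpose_mul GiT)
  have uniq: "B = C" if "P B" "P C" for B C
  proof -
    have BM: "B ** M = mat 1" using left_inv_of_inj[OF inj] that(1) by (simp add: P_def)
    have CM: "C ** M = mat 1" using left_inv_of_inj[OF inj] that(2) by (simp add: P_def)
    have sB: "transpose (M ** B) = M ** B" and sC: "transpose (M ** C) = M ** C"
      using that by (auto simp: P_def)
    have "B = B ** (M ** B)" using BM by (simp add: matrix_mul_assoc)
    also have "\<dots> = B ** transpose (M ** B)" using sB by simp
    also have "\<dots> = B ** transpose B ** transpose M"
      by (simp add: matrix_transpose_mul matrix_mul_assoc)
    also have "transpose M = transpose (M ** C ** M)" using that(2) by (simp add: P_def)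
    also have "B ** transpose B ** \<dots> = B ** transpose (M ** B) ** transpose (M ** C)"
      by (simp add: matrix_transpose_mul matrix_mul_assoc)
    also have "\<dots> = B ** (M ** B) ** (M ** C)" using sB sC by simp
    also have "\<dots> = (B ** M) ** (B ** M) ** C" by (simp add: matrix_mul_assoc)
    also have "\<dots> = C" using BM by simp
    finally show ?thesis .
  qed
  have "P (pinv M)"
    unfolding pinv_def P_def[symmetric]
    by (rule theI[of P B0, OF PB0 uniq[OF _ PB0]])
  then show ?thesis using left_inv_of_inj[OF inj] by (simp add: P_def)
qed


definition Hmat :: "('p::finite \<Rightarrow> real) \<Rightarrow> ('p \<Rightarrow> real^'n) \<Rightarrow> real^'n^'n" where
  "Hmat w a = (\<chi> r s. \<Sum>j\<in>UNIV. w j * (a j $ r * a j $ s))"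

lemma Hmat_T: "transpose (Hmat w a) = Hmat w a"
  by (simp add: Hmat_def transpose_def vec_eq_iff mult.commute)

lemma Hmat_mul: "Hmat w a *v v = (\<Sum>j\<in>UNIV. (w j * inner (a j) v) *\<^sub>R a j)"
proof -
  have "(Hmat w a *v v) $ r = (\<Sum>j\<in>UNIV. (w j * inner (a j) v) *\<^sub>R a j) $ r" for r
  proof -
    have "(Hmat w a *v v) $ r = (\<Sum>s\<in>UNIV. \<Sum>j\<in>UNIV. w j * (a j $ r * a j $ s) * v $ s)"
      by (simp add: Hmat_def matrix_vector_mult_def sum_distrib_right)
    also have "\<dots> = (\<Sum>j\<in>UNIV. \<Sum>s\<in>UNIV. w j * (a j $ r * a j $ s) * v $ s)"
      by (rule sum.swap)
    also have "\<dots> = (\<Sum>j\<in>UNIV. (w j * inner (a j) v) *\<^sub>R a j) $ r"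
      by (simp add: sum_component inner_vec_def sum_distrib_left sum_distrib_right mult_ac)
    finally show ?thesis .
  qed
  then show ?thesis by (simp add: vec_eq_iff)
qed

lemma Hmat_inner: "inner (Hmat w a) D = (\<Sum>j\<in>UNIV. w j * inner (a j) (D *v a j))"
proof -
  have "inner (Hmat w a) D = (\<Sum>r\<in>UNIV. \<Sum>s\<in>UNIV. \<Sum>j\<in>UNIV. w j * (a j $ r * a j $ s) * D $ r $ s)"
    by (simp add: Hmat_def inner_vec_def sum_distrib_right)
  also have "\<dots> = (\<Sum>r\<in>UNIV. \<Sum>j\<in>UNIV. \<Sum>s\<in>UNIV. w j * (a j $ r * a j $ s) * D $ r $ s)"
    by (rule sum.cong[OF refl], rule sum.swap)
  also have "\<dots> = (\<Sum>j\<in>UNIV. \<Sum>r\<in>UNIV. \<Sum>s\<in>UNIV. w j * (a j $ r * a j $ s) * D $ r $ s)"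
    by (rule sum.swap)
  also have "\<dots> = (\<Sum>j\<in>UNIV. w j * inner (a j) (D *v a j))"
    by (simp add: inner_vec_def matrix_vector_mult_def sum_distrib_left sum_distrib_right mult_ac)
  finally show ?thesis .
qed

lemma sum_UNIV_Plus: "(\<Sum>b\<in>(UNIV::('a::finite+'b::finite) set). h b) = (\<Sum>i\<in>UNIV. h (Inl i)) + (\<Sum>j\<in>UNIV. h (Inr j))"
  using sum.Plus[of "UNIV::'a set" "UNIV::'b set" h] by (simp add: o_def)

lemma sum_UNIV_unit: "(\<Sum>b\<in>(UNIV::unit set). h b) = h ()"
  by (simp add: UNIV_unit)



lemma inf_norm_row: "(\<Sum>j\<in>UNIV. \<bar>A $ i $ j\<bar>) \<le> inf_norm A"
  unfolding inf_norm_def by (rule Max_ge) auto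

lemma inf_norm_nonneg: "0 \<le> inf_norm A"
  using inf_norm_row[of A undefined] by (meson order_trans sum_nonneg abs_ge_zero)

lemma row_bound:
  fixes A :: "real^'m^'k"
  assumes "\<And>j. \<bar>u $ j\<bar> \<le> W"
  shows "\<bar>(A *v u) $ i\<bar> \<le> inf_norm A * W"
proof -
  have "\<bar>(A *v u) $ i\<bar> = \<bar>\<Sum>j\<in>UNIV. A $ i $ j * u $ j\<bar>" by (simp add: matrix_vector_mult_def)
  also have "\<dots> \<le> (\<Sum>j\<in>UNIV. \<bar>A $ i $ j * u $ j\<bar>)" by (rule sum_abs)
  also have "\<dots> \<le> (\<Sum>j\<in>UNIV. \<bar>A $ i $ j\<bar> * W)"
    by (rule sum_mono) (simp add: abs_mult assms mult_left_mono)
  also have "\<dots> = (\<Sum>j\<in>UNIV. \<bar>A $ i $ j\<bar>) * W" by (simp add: sum_distrib_right)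
  also have "\<dots> \<le> inf_norm A * W"
    using inf_norm_row[of A i] assms[of undefined] by (intro mult_right_mono) auto
  finally show ?thesis .
qed

lemma norm_le_sqrt_card:
  fixes v :: "real^'n"
  assumes "\<And>j. \<bar>v $ j\<bar> \<le> K"
  shows "norm v \<le> sqrt (real CARD('n)) * K"
proof -
  have K0: "0 \<le> K" using assms[of undefined] by linarith
  have "norm v = sqrt (\<Sum>j\<in>UNIV. (v $ j)^2)" by (simp add: norm_vec_def L2_set_def)
  also have "\<dots> \<le> sqrt (\<Sum>j\<in>(UNIV::'n set). K^2)"
  proof (rule real_sqrt_le_mono, rule sum_mono)
    fix j show "(v $ j)^2 \<le> K^2" using assms[of j] K0
      by (metis abs_le_square_iff abs_of_nonneg)
  qed
  also have "\<dots> = sqrt (real CARD('n)) * K" using K0 by (simp add: real_sqrt_mult)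
  finally show ?thesis .
qed

lemma lin_aux: "(N::real) \<le> P + k + l \<Longrightarrow> P = a + b/2 \<Longrightarrow> 0 \<le> a \<Longrightarrow> 0 \<le> b \<Longrightarrow> 0 \<le> c \<Longrightarrow> 0 \<le> e \<Longrightarrow> 0 \<le> k \<Longrightarrow> 0 \<le> l \<Longrightarrow> N \<le> e + b + l + k + 2*k + 2*c + 2*a"
  by linarith




theorem theorem8p4:
  fixes f ft :: "real^'n \<Rightarrow> real" and gf :: "real^'n \<Rightarrow> real^'n"
    and y :: "'p::finite \<Rightarrow> real^'n" and x :: "real^'n"
    and c :: real and g :: "real^'n" and H :: "real^'n^'n"
    and L \<epsilon>f \<Delta> \<beta> :: real
  assumes p_lower: "CARD('n) + 2 \<le> CARD('p)"
    and p_upper: "CARD('p) \<le> (CARD('n) + 1) * (CARD('n) + 2) div 2 - 1"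
    and bdd_below: "\<exists>b. \<forall>z. b \<le> f z"
    and grad: "\<And>z. GDERIV f z :> gf z"
    and grad_cont: "continuous_on UNIV gf"
    and lip: "L-lipschitz_on UNIV gf"
    and eps_pos: "\<epsilon>f > 0"
    and noise: "\<And>z. \<bar>ft z - f z\<bar> \<le> \<epsilon>f"
    and Delta_pos: "\<Delta> > 0"
    and beta_pos: "\<beta> > 0"
    and points: "\<And>i. norm (y i - x) \<le> \<beta> * \<Delta>"
    and F_inv: "invertible (Fhat x \<Delta> y)"
    and mfn: "is_mfn_interp x y (\<lambda>i. ft (y i)) c g H"
  shows "let Fi = inf_norm (matrix_inv (Fhat x \<Delta> y));
             Mi = inf_norm (pinv (Mhat x \<Delta> y));
             nn = real CARD('n); pp = real CARD('p);
             \<kappa>H = L / 2 * pp * \<beta>^4 * Fi + \<epsilon>f / \<Delta>^2 * pp * \<beta>^2 * Fi;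
             \<kappa>mf = (L + \<kappa>H) / 2 * (1 + sqrt nn) * \<beta>^2 * Mi + (L + \<kappa>H) / 2;
             \<kappa>mf' = (1 + sqrt nn) * Mi;
             \<kappa>mg = 2 * \<kappa>mf + 2 * \<kappa>H;
             \<kappa>mg' = 2 * \<kappa>mf'
         in onorm (\<lambda>v. H *v v) \<le> \<kappa>H \<and>
            (\<forall>z \<in> cball x \<Delta>.
               \<bar>qval c g H x z - f z\<bar> \<le> \<kappa>mf * \<Delta>^2 + \<kappa>mf' * \<epsilon>f \<and>
               norm ((g + H *v (z - x)) - gf z) \<le> \<kappa>mg * \<Delta> + \<kappa>mg' * \<epsilon>f / \<Delta>)"
proof -
  define a where "a i = y i - x" for i
  have L0: "0 \<le> L" using lipschitz_on_nonneg[OF lip] .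
  have na2: "norm (a i)^2 \<le> \<beta>^2 * \<Delta>^2" for i
  proof -
    have "norm (a i)^2 \<le> (\<beta> * \<Delta>)^2"
      using points[of i] by (intro power_mono) (auto simp: a_def)
    then show ?thesis by (simp add: power_mult_distrib)
  qed
  have sh: "shat x \<Delta> y i $ k = a i $ k / \<Delta>" for i k
    by (simp add: shat_def a_def divide_inverse mult.commute)
  have shin: "inner (shat x \<Delta> y i) (shat x \<Delta> y j) = inner (a i) (a j) / \<Delta>^2" for i j
    by (simp add: shat_def a_def power2_eq_square divide_inverse)
  have taylor: "\<bar>f w - f u - inner (gf u) (w - u)\<bar> \<le> L/2 * norm (w - u)^2" for w u
    by (rule taylor_lip[OF grad lip])
  have quadH: "\<bar>inner u (H *v u)\<bar> \<le> onorm ((*v) H) * norm u ^ 2" for u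
  proof -
    have "\<bar>inner u (H *v u)\<bar> \<le> norm u * norm (H *v u)" by (rule Cauchy_Schwarz_ineq2)
    also have "\<dots> \<le> norm u * (onorm ((*v) H) * norm u)"
      by (intro mult_left_mono onorm) auto
    finally show ?thesis by (simp add: power2_eq_square mult_ac)
  qed

  text \<open>The F-hat system.\<close>
  define F where "F = Fhat x \<Delta> y"
  define Fi where "Fi = matrix_inv F"
  have FFi: "F ** Fi = mat 1"
    using F_inv unfolding F_def Fi_def invertible_def matrix_inv_def
    by (metis (mono_tags, lifting) someI_ex)
  define vv where "vv j = ft (y j) - f x - inner (gf x) (a j)" for j
  define V where "V = L/2 * \<beta>^2 * \<Delta>^2 + \<epsilon>f"
  have V0: "0 \<le> V" unfolding V_def using L0 eps_pos by simp
  have vvb: "\<bar>vv j\<bar> \<le> V" for j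
  proof -
    have "\<bar>f (y j) - f x - inner (gf x) (a j)\<bar> \<le> L/2 * norm (a j)^2"
      using taylor[of "y j" x] by (simp add: a_def)
    also have "\<dots> \<le> L/2 * (\<beta>^2 * \<Delta>^2)" using na2[of j] L0 by (intro mult_left_mono) auto
    finally have t: "\<bar>f (y j) - f x - inner (gf x) (a j)\<bar> \<le> L/2 * \<beta>^2 * \<Delta>^2" by (simp add: mult.assoc)
    show ?thesis using t noise[of "y j"] unfolding vv_def V_def by linarith
  qed
  define rhs :: "real^('p + (unit + 'n))" where "rhs = (\<chi> b. case b of Inl j \<Rightarrow> vv j | Inr _ \<Rightarrow> 0)"
  have rhsb: "\<bar>rhs $ b\<bar> \<le> V" for b
    using vvb V0 by (cases b) (auto simp: rhs_def)
  define sol where "sol = Fi *v rhs"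
  have Fsol: "F *v sol = rhs" by (simp add: sol_def matrix_vector_mul_assoc FFi)
  define lam where "lam j = sol $ Inl j" for j
  define cs where "cs = sol $ Inr (Inl ())"
  define gs :: "real^'n" where "gs = (\<chi> k. sol $ Inr (Inr k) / \<Delta>)"
  have row: "(\<Sum>b\<in>UNIV. F $ r $ b * sol $ b) = rhs $ r" for r
    using Fsol by (simp add: matrix_vector_mult_def vec_eq_iff)
  have r1: "(\<Sum>j\<in>UNIV. lam j) = 0"
    using row[of "Inr (Inl ())"] by (simp add: F_def Fhat_def Mhat_def sum_UNIV_Plus lam_def rhs_def)
  have r2: "(\<Sum>j\<in>UNIV. lam j *\<^sub>R a j) = 0"
  proof -
    have "(\<Sum>j\<in>UNIV. lam j *\<^sub>R a j) $ k = 0" for k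
    proof -
      have "(\<Sum>j\<in>UNIV. a j $ k / \<Delta> * lam j) = 0"
        using row[of "Inr (Inr k)"] by (simp add: F_def Fhat_def Mhat_def sum_UNIV_Plus lam_def rhs_def sh)
      then have "\<Delta> * (\<Sum>j\<in>UNIV. a j $ k / \<Delta> * lam j) = 0" by simp
      then show ?thesis using Delta_pos by (simp add: sum_distrib_left sum_component mult_ac)
    qed
    then show ?thesis by (simp add: vec_eq_iff)
  qed
  have Pij: "Phat x \<Delta> y $ i $ j = (inner (a i) (a j))^2 / (2 * \<Delta>^4)" for i j
    by (simp add: Phat_def shin power_divide)
  have r3: "(\<Sum>j\<in>UNIV. (inner (a i) (a j))^2 / (2 * \<Delta>^4) * lam j) + cs + inner (a i) gs = vv i" for i
  proof -
    have "(\<Sum>k\<in>UNIV. shat x \<Delta> y i $ k * sol $ Inr (Inr k)) = inner (a i) gs"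
      using Delta_pos by (simp add: sh gs_def inner_vec_def)
    then show ?thesis
      using row[of "Inl i"] by (simp add: F_def Fhat_def Mhat_def sum_UNIV_Plus lam_def rhs_def Pij cs_def sum_UNIV_unit)
  qed

  text \<open>The model Hessian.\<close>
  define Hs where "Hs = Hmat (\<lambda>j. lam j / \<Delta>^4) a"
  have Hquad: "inner u (Hs *v u) = (\<Sum>j\<in>UNIV. lam j / \<Delta>^4 * (inner (a j) u)^2)" for u
    by (simp add: Hs_def Hmat_mul inner_sum_right power2_eq_square inner_commute mult_ac)
  define c' where "c' = cs + f x"
  define g' where "g' = gs + gf x"
  have feas: "qval c' g' Hs x (y i) = ft (y i)" for i
  proof -
    have "1/2 * inner (a i) (Hs *v a i) = (\<Sum>j\<in>UNIV. (inner (a i) (a j))^2 / (2 * \<Delta>^4) * lam j)"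
      unfolding Hquad sum_distrib_left by (rule sum.cong) (auto simp: inner_commute)
    then show ?thesis
      using r3[of i] unfolding qval_def c'_def g'_def vv_def a_def
      by (simp add: inner_add_left inner_commute[of gs] inner_commute[of "gf x"])
  qed
  have HHs: "H = Hs"
  proof -
    have HT: "transpose H = H" and Hint: "\<And>i. qval c g H x (y i) = ft (y i)"
      and Hmin: "(1/4) * (norm H)^2 \<le> (1/4) * (norm Hs)^2"
    proof -
      have "transpose Hs = Hs" by (simp add: Hs_def Hmat_T)
      then show "transpose H = H" "\<And>i. qval c g H x (y i) = ft (y i)"
          "(1/4) * (norm H)^2 \<le> (1/4) * (norm Hs)^2"
        using mfn feas unfolding is_mfn_interp_def by blast+
    qed
    define D where "D = H - Hs"
    have eqj: "inner (a j) (D *v a j) = -2 * ((c - c') + inner (g - g') (a j))" for j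
    proof -
      have "qval c g H x (y j) - qval c' g' Hs x (y j) = 0" using Hint feas by simp
      then show ?thesis unfolding qval_def D_def a_def
        by (simp add: matrix_vector_mult_diff_rdistrib inner_diff_left inner_diff_right algebra_simps)
    qed
    have "inner Hs D = (\<Sum>j\<in>UNIV. lam j / \<Delta>^4 * (-2 * ((c - c') + inner (g - g') (a j))))"
      unfolding Hs_def Hmat_inner eqj ..
    also have "\<dots> = (\<Sum>j\<in>UNIV. (-2 / \<Delta>^4 * (c - c')) * lam j + (-2 / \<Delta>^4) * inner (g - g') (lam j *\<^sub>R a j))"
      by (rule sum.cong) (auto simp: algebra_simps add_divide_distrib[symmetric])
    also have "\<dots> = (-2 / \<Delta>^4 * (c - c')) * (\<Sum>j\<in>UNIV. lam j) + (-2 / \<Delta>^4) * inner (g - g') (\<Sum>j\<in>UNIV. lam j *\<^sub>R a j)"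
      by (simp only: sum.distrib sum_distrib_left inner_sum_right)
    also have "\<dots> = 0" using r1 r2 by simp
    finally have iHD: "inner Hs D = 0" .
    have "(norm H)^2 = (norm Hs)^2 + 2 * inner Hs D + (norm D)^2"
      unfolding D_def by (simp add: power2_norm_eq_inner inner_diff_left inner_diff_right inner_commute)
    then have "(norm D)^2 \<le> 0" using Hmin iHD by simp
    then have "D = 0" by simp
    then show ?thesis unfolding D_def by simp
  qed
  have lamb: "\<bar>lam j\<bar> \<le> inf_norm Fi * V" for j
    unfolding lam_def sol_def by (rule row_bound[OF rhsb])
  have Fi0: "0 \<le> inf_norm Fi" by (rule inf_norm_nonneg)
  have onHs: "onorm ((*v) Hs) \<le> real CARD('p) * (inf_norm Fi * V / \<Delta>^4 * (\<beta>^2 * \<Delta>^2))"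
  proof (rule onorm_le)
    fix v
    have "norm (Hs *v v) \<le> (\<Sum>j\<in>UNIV. norm ((lam j / \<Delta>^4 * inner (a j) v) *\<^sub>R a j))"
      unfolding Hs_def Hmat_mul by (rule norm_sum)
    also have "\<dots> \<le> (\<Sum>j\<in>(UNIV::'p set). inf_norm Fi * V / \<Delta>^4 * (\<beta>^2 * \<Delta>^2) * norm v)"
    proof (rule sum_mono)
      fix j
      have "norm ((lam j / \<Delta>^4 * inner (a j) v) *\<^sub>R a j) = \<bar>lam j\<bar> / \<Delta>^4 * (\<bar>inner (a j) v\<bar> * norm (a j))"
        using Delta_pos by (simp add: abs_mult)
      also have "\<dots> \<le> \<bar>lam j\<bar> / \<Delta>^4 * (norm (a j)^2 * norm v)"
      proof -
        have "\<bar>inner (a j) v\<bar> * norm (a j) \<le> (norm (a j) * norm v) * norm (a j)"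
          by (intro mult_right_mono Cauchy_Schwarz_ineq2) auto
        then show ?thesis using Delta_pos
          by (intro mult_left_mono) (auto simp: power2_eq_square mult_ac)
      qed
      also have "\<dots> \<le> inf_norm Fi * V / \<Delta>^4 * (\<beta>^2 * \<Delta>^2 * norm v)"
        using Delta_pos lamb[of j] na2[of j]
        by (intro mult_mono divide_right_mono) (auto simp: mult_right_mono)
      finally show "norm ((lam j / \<Delta>^4 * inner (a j) v) *\<^sub>R a j) \<le> inf_norm Fi * V / \<Delta>^4 * (\<beta>^2 * \<Delta>^2) * norm v"
        by (simp add: mult_ac)
    qed
    also have "\<dots> = real CARD('p) * (inf_norm Fi * V / \<Delta>^4 * (\<beta>^2 * \<Delta>^2)) * norm v"
      by simp
    finally show "norm (Hs *v v) \<le> real CARD('p) * (inf_norm Fi * V / \<Delta>^4 * (\<beta>^2 * \<Delta>^2)) * norm v" .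
  qed

  define FI where "FI = inf_norm Fi"
  define pp where "pp = real CARD('p)"
  define nn where "nn = real CARD('n)"
  define kH where "kH = L / 2 * pp * \<beta>^4 * FI + \<epsilon>f / \<Delta>^2 * pp * \<beta>^2 * FI"
  have onH: "onorm ((*v) H) \<le> kH"
  proof -
    have "real CARD('p) * (inf_norm Fi * V / \<Delta>^4 * (\<beta>^2 * \<Delta>^2)) = kH"
      unfolding kH_def V_def FI_def pp_def using Delta_pos
      by (simp add: field_simps power2_eq_square power4_eq_xxxx)
    then show ?thesis using onHs HHs by simp
  qed
  have kH0: "0 \<le> kH" unfolding kH_def FI_def pp_def using Fi0 L0 eps_pos Delta_pos by simp

  text \<open>The M-hat system.\<close>
  define M where "M = Mhat x \<Delta> y"
  have injM: "inj ((*v) M)"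
  proof -
    have z0: "z = 0" if "M *v z = 0" for z
    proof -
      define e :: "real^('p + (unit + 'n))" where "e = (\<chi> b. case b of Inl _ \<Rightarrow> 0 | Inr k \<Rightarrow> z $ k)"
      have "F *v e = 0"
      proof -
        have "(F *v e) $ r = 0" for r
        proof (cases r)
          case (Inl i)
          have "(M *v z) $ i = 0" using that by simp
          then show ?thesis using Inl
            by (simp add: matrix_vector_mult_def F_def Fhat_def e_def sum_UNIV_Plus M_def)
        next
          case (Inr k)
          then show ?thesis
            by (simp add: matrix_vector_mult_def F_def Fhat_def e_def sum_UNIV_Plus)
        qed
        then show ?thesis by (simp add: vec_eq_iff)
      qed
      then have "F *v e = F *v 0" by simp
      then have "e = 0" using inj_matrix_vector_mult[OF F_inv] unfolding F_def inj_def by blast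
      then show ?thesis by (simp add: vec_eq_iff e_def) (metis sum.case(2))
    qed
    show ?thesis
    proof (rule injI)
      fix u v assume "M *v u = M *v v"
      then have "M *v (u - v) = 0" by (simp add: matrix_vector_mult_diff_distrib)
      then have "u - v = 0" by (rule z0)
      then show "u = v" by simp
    qed
  qed
  define B where "B = pinv M"
  have BM: "B ** M = mat 1" unfolding B_def by (rule pinv_left[OF injM])
  have B0: "0 \<le> inf_norm B" by (rule inf_norm_nonneg)
  define zz :: "real^(unit + 'n)" where "zz = (\<chi> k. case k of Inl _ \<Rightarrow> c - f x | Inr j \<Rightarrow> \<Delta> * (g - gf x) $ j)"
  define w where "w = (\<chi> i. ft (y i) - f x - inner (gf x) (a i) - 1/2 * inner (a i) (H *v a i))"
  have Hint: "qval c g H x (y i) = ft (y i)" for i using mfn unfolding is_mfn_interp_def by blast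
  have Mzz: "M *v zz = w"
  proof -
    have "(M *v zz) $ i = w $ i" for i
    proof -
      have "(M *v zz) $ i = c - f x + inner (a i) (g - gf x)"
        using Delta_pos by (simp add: matrix_vector_mult_def M_def Mhat_def zz_def sum_UNIV_Plus sum_UNIV_unit sh inner_vec_def)
      then show ?thesis using Hint[of i] unfolding w_def qval_def a_def
        by (simp add: inner_diff_right inner_commute)
    qed
    then show ?thesis by (simp add: vec_eq_iff)
  qed
  have zzB: "zz = B *v w" using BM Mzz by (metis matrix_vector_mul_assoc matrix_vector_mul_lid)
  define W where "W = \<epsilon>f + (L + kH) / 2 * \<beta>^2 * \<Delta>^2"
  have wb: "\<bar>w $ i\<bar> \<le> W" for i
  proof -
    have t: "\<bar>f (y i) - f x - inner (gf x) (a i)\<bar> \<le> L/2 * (\<beta>^2 * \<Delta>^2)"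
    proof -
      have "L/2 * norm (a i)^2 \<le> L/2 * (\<beta>^2 * \<Delta>^2)" using na2[of i] L0 by (intro mult_left_mono) auto
      then show ?thesis using taylor[of "y i" x] unfolding a_def by linarith
    qed
    have q: "\<bar>inner (a i) (H *v a i)\<bar> \<le> kH * (\<beta>^2 * \<Delta>^2)"
      using quadH[of "a i"] onH na2[of i] kH0
      by (meson order_trans mult_mono norm_ge_zero zero_le_power2 onorm_pos_le matrix_vector_mul_bounded_linear)
    have We: "W = \<epsilon>f + L/2 * (\<beta>^2 * \<Delta>^2) + 1/2 * (kH * (\<beta>^2 * \<Delta>^2))"
      by (simp add: W_def algebra_simps)
    have wi: "w $ i = (ft (y i) - f (y i)) + (f (y i) - f x - inner (gf x) (a i)) - 1/2 * inner (a i) (H *v a i)"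
      by (simp add: w_def)
    show ?thesis unfolding We wi using t q noise[of "y i"] by linarith
  qed
  define Mi where "Mi = inf_norm B"
  have zzb: "\<bar>zz $ k\<bar> \<le> Mi * W" for k unfolding zzB Mi_def by (rule row_bound[OF wb])
  have cb: "\<bar>c - f x\<bar> \<le> Mi * W" using zzb[of "Inl ()"] by (simp add: zz_def)
  have gb: "norm (g - gf x) \<le> sqrt nn * (Mi * W / \<Delta>)"
    unfolding nn_def
  proof (rule norm_le_sqrt_card)
    fix j
    have "\<bar>\<Delta> * (g - gf x) $ j\<bar> \<le> Mi * W" using zzb[of "Inr j"] by (simp only: zz_def vec_lambda_beta sum.case)
    then have "\<Delta> * \<bar>(g - gf x) $ j\<bar> \<le> Mi * W" using Delta_pos by (simp only: abs_mult abs_of_pos)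
    then show "\<bar>(g - gf x) $ j\<bar> \<le> Mi * W / \<Delta>" using Delta_pos
      by (simp add: pos_le_divide_eq mult.commute)
  qed

  have FIe: "inf_norm (matrix_inv (Fhat x \<Delta> y)) = FI" by (simp add: FI_def Fi_def F_def)
  have Mie: "inf_norm (pinv (Mhat x \<Delta> y)) = Mi" by (simp add: Mi_def B_def M_def)
  have Mi0: "0 \<le> Mi" unfolding Mi_def by (rule B0)
  have W0: "0 \<le> W" unfolding W_def using eps_pos L0 kH0 by simp
  define kmf where "kmf = (L + kH) / 2 * (1 + sqrt nn) * \<beta>^2 * Mi + (L + kH) / 2"
  define kmf' where "kmf' = (1 + sqrt nn) * Mi"
  have main: "\<bar>qval c g H x z - f z\<bar> \<le> kmf * \<Delta>^2 + kmf' * \<epsilon>f \<and>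
      norm ((g + H *v (z - x)) - gf z) \<le> (2 * kmf + 2 * kH) * \<Delta> + (2 * kmf') * \<epsilon>f / \<Delta>"
    if zc: "z \<in> cball x \<Delta>" for z
  proof -
    define d where "d = z - x"
    have nd: "norm d \<le> \<Delta>" using zc by (simp add: d_def dist_norm norm_minus_commute)
    have nd2: "norm d ^ 2 \<le> \<Delta>^2" using nd by (intro power_mono) auto
    have s0: "0 \<le> sqrt nn" by (simp add: nn_def)
    have gW: "0 \<le> sqrt nn * (Mi * W / \<Delta>)" using s0 Mi0 W0 Delta_pos by simp
    have ig: "\<bar>inner (g - gf x) d\<bar> \<le> sqrt nn * Mi * W"
    proof -
      have "\<bar>inner (g - gf x) d\<bar> \<le> norm (g - gf x) * norm d" by (rule Cauchy_Schwarz_ineq2)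
      also have "\<dots> \<le> sqrt nn * (Mi * W / \<Delta>) * \<Delta>" using gb nd gW by (intro mult_mono) auto
      also have "\<dots> = sqrt nn * Mi * W" using Delta_pos by simp
      finally show ?thesis .
    qed
    have oH0: "0 \<le> onorm ((*v) H)" by (rule onorm_pos_le) simp
    have iq: "\<bar>inner d (H *v d)\<bar> \<le> kH * \<Delta>^2"
      using order_trans[OF quadH[of d] mult_mono[OF onH nd2 kH0 zero_le_power2]] .
    have tz: "\<bar>f z - f x - inner (gf x) d\<bar> \<le> L/2 * \<Delta>^2"
    proof -
      have "L/2 * norm d^2 \<le> L/2 * \<Delta>^2" using nd2 L0 by (intro mult_left_mono) auto
      then show ?thesis using taylor[of z x] unfolding d_def by linarith
    qed
    have dec: "qval c g H x z - f z = (c - f x) + inner (g - gf x) d + 1/2 * inner d (H *v d) - (f z - f x - inner (gf x) d)"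
      by (simp add: qval_def d_def inner_diff_left algebra_simps)
    have e1: "Mi * W + sqrt nn * Mi * W + 1/2 * (kH * \<Delta>^2) + L/2 * \<Delta>^2 = kmf * \<Delta>^2 + kmf' * \<epsilon>f"
      by (simp add: kmf_def kmf'_def W_def field_simps)
    have part1: "\<bar>qval c g H x z - f z\<bar> \<le> kmf * \<Delta>^2 + kmf' * \<epsilon>f"
      unfolding dec e1[symmetric] using cb ig iq tz by linarith
    have dec2: "(g + H *v (z - x)) - gf z = (g - gf x) + H *v d - (gf z - gf x)"
      by (simp add: d_def)
    have nH: "norm (H *v d) \<le> kH * \<Delta>"
      using order_trans[OF onorm[of "(*v) H" d] mult_mono[OF onH nd kH0 norm_ge_zero]] by simp
    have nG: "norm (gf z - gf x) \<le> L * \<Delta>"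
      using order_trans[OF lipschitz_onD[OF lip, of z x] mult_left_mono[OF _ L0]] nd
      by (simp add: dist_norm d_def)
    have n2: "norm ((g + H *v (z - x)) - gf z) \<le> sqrt nn * (Mi * W / \<Delta>) + kH * \<Delta> + L * \<Delta>"
    proof -
      have "norm ((g + H *v (z - x)) - gf z) \<le> norm (g - gf x) + norm (H *v d) + norm (gf z - gf x)"
        unfolding dec2 by (meson norm_triangle_ineq norm_triangle_ineq4 order_trans add_mono order_refl)
      then show ?thesis using gb nH nG by linarith
    qed
    define A1 where "A1 = Mi * \<epsilon>f / \<Delta>"
    define A2 where "A2 = (L + kH) * \<beta>^2 * Mi * \<Delta>"
    have A10: "0 \<le> A1" unfolding A1_def using Mi0 eps_pos Delta_pos by simp
    have A20: "0 \<le> A2" unfolding A2_def using Mi0 L0 kH0 Delta_pos by simp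
    have sA1: "0 \<le> sqrt nn * A1" using A10 s0 by simp
    have sA2: "0 \<le> sqrt nn * A2" using A20 s0 by simp
    have kD: "0 \<le> kH * \<Delta>" using kH0 Delta_pos by simp
    have LD: "0 \<le> L * \<Delta>" using L0 Delta_pos by simp
    have le: "sqrt nn * (Mi * W / \<Delta>) = sqrt nn * A1 + sqrt nn * A2 / 2"
      using Delta_pos by (simp add: W_def A1_def A2_def field_simps power2_eq_square)
    have re: "(2 * kmf + 2 * kH) * \<Delta> + (2 * kmf') * \<epsilon>f / \<Delta> =
        A2 + sqrt nn * A2 + L * \<Delta> + kH * \<Delta> + 2 * (kH * \<Delta>) + 2 * A1 + 2 * (sqrt nn * A1)"
      using Delta_pos by (simp add: kmf_def kmf'_def A1_def A2_def field_simps)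
    have part2: "norm ((g + H *v (z - x)) - gf z) \<le> (2 * kmf + 2 * kH) * \<Delta> + (2 * kmf') * \<epsilon>f / \<Delta>"
      unfolding re by (rule lin_aux[OF n2 le sA1 sA2 A10 A20 kD LD])
    show ?thesis using part1 part2 by blast
  qed
  show ?thesis
    unfolding Let_def FIe Mie pp_def[symmetric] nn_def[symmetric] kH_def[symmetric]
      kmf_def[symmetric] kmf'_def[symmetric]
    using onH main by blast
qed
end
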